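(* Let $F$ be a commutative ring and $R$ an $F$-algebra with a descending filtration of ideals $R=I_0\supseteq I_1\supseteq I_2\supseteq\cdots$ such that $R/I_s$ is an artinian $F$-algebra for every $s$. Let $\overline{R}=\varprojlim R/I_j$ be the completion, with the inverse limit topology in which each $R/I_j$ is discrete. Then every finitely generated left ideal and every finitely generated right ideal of $\overline{R}$ is closed.
   Context: A descending filtration of $R$ is a sequence of ideals $R=I_0\supseteq I_1\supseteq\cdots$ with $\bigcap_t I_t=0$ and $I_sI_t\subseteq I_{s+t}$ for all $s,t$. $\overline{R}$ is a Hausdorff topological ring. *)

theory Defs
  imports "HOL-Analysis.Analysis" "HOL-Algebra.Algebra"
begin

definition F_algebra :: "('f, 'g) ring_scheme \<Rightarrow> ('f, 'a, 'b) module_scheme \<Rightarrow> bool" where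
  "F_algebra F R \<longleftrightarrow> module F R \<and> ring R \<and>
     (\<forall>a \<in> carrier F. \<forall>x \<in> carrier R. \<forall>y \<in> carrier R.
        (a \<odot>\<^bsub>R\<^esub> x) \<otimes>\<^bsub>R\<^esub> y = a \<odot>\<^bsub>R\<^esub> (x \<otimes>\<^bsub>R\<^esub> y) \<and>
        x \<otimes>\<^bsub>R\<^esub> (a \<odot>\<^bsub>R\<^esub> y) = a \<odot>\<^bsub>R\<^esub> (x \<otimes>\<^bsub>R\<^esub> y))"

definition left_ideal :: "('a, 'b) ring_scheme \<Rightarrow> 'a set \<Rightarrow> bool" where
  "left_ideal S L \<longleftrightarrow> additive_subgroup L S \<and>
     (\<forall>a \<in> carrier S. \<forall>x \<in> L. a \<otimes>\<^bsub>S\<^esub> x \<in> L)"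

definition right_ideal :: "('a, 'b) ring_scheme \<Rightarrow> 'a set \<Rightarrow> bool" where
  "right_ideal S L \<longleftrightarrow> additive_subgroup L S \<and>
     (\<forall>a \<in> carrier S. \<forall>x \<in> L. x \<otimes>\<^bsub>S\<^esub> a \<in> L)"

definition left_genideal :: "('a, 'b) ring_scheme \<Rightarrow> 'a set \<Rightarrow> 'a set" where
  "left_genideal S A = Inter {L. left_ideal S L \<and> A \<subseteq> L}"

definition right_genideal :: "('a, 'b) ring_scheme \<Rightarrow> 'a set \<Rightarrow> 'a set" where
  "right_genideal S A = Inter {L. right_ideal S L \<and> A \<subseteq> L}"

definition left_artinian :: "('a, 'b) ring_scheme \<Rightarrow> bool" where
  "left_artinian S \<longleftrightarrow> (\<forall>f :: nat \<Rightarrow> 'a set.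
     (\<forall>n. left_ideal S (f n)) \<and> (\<forall>n. f (Suc n) \<subseteq> f n) \<longrightarrow> (\<exists>N. \<forall>n\<ge>N. f n = f N))"

definition right_artinian :: "('a, 'b) ring_scheme \<Rightarrow> bool" where
  "right_artinian S \<longleftrightarrow> (\<forall>f :: nat \<Rightarrow> 'a set.
     (\<forall>n. right_ideal S (f n)) \<and> (\<forall>n. f (Suc n) \<subseteq> f n) \<longrightarrow> (\<exists>N. \<forall>n\<ge>N. f n = f N))"

definition artinian_ring :: "('a, 'b) ring_scheme \<Rightarrow> bool" where
  "artinian_ring S \<longleftrightarrow> ring S \<and> left_artinian S \<and> right_artinian S"

definition descending_filtration :: "('a, 'b) ring_scheme \<Rightarrow> (nat \<Rightarrow> 'a set) \<Rightarrow> bool" where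
  "descending_filtration R I \<longleftrightarrow>
     I 0 = carrier R \<and> (\<forall>t. ideal (I t) R) \<and> (\<forall>t. I (Suc t) \<subseteq> I t) \<and>
     Inter (range I) = {\<zero>\<^bsub>R\<^esub>} \<and>
     (\<forall>s t. \<forall>a \<in> I s. \<forall>b \<in> I t. a \<otimes>\<^bsub>R\<^esub> b \<in> I (s + t))"

(* The inverse limit lim_j R/I_j: compatible sequences of cosets x j \<in> R/I_j.
   The transition map R/I_j \<rightarrow> R/I_i (i \<le> j) sends a coset of I_j to the unique
   coset of I_i containing it, so compatibility means x j \<subseteq> x i. *)
definition completion_carrier :: "('a, 'b) ring_scheme \<Rightarrow> (nat \<Rightarrow> 'a set) \<Rightarrow> (nat \<Rightarrow> 'a set) set" where
  "completion_carrier R I =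
     {x. (\<forall>j. x j \<in> carrier (R Quot I j)) \<and> (\<forall>i j. i \<le> j \<longrightarrow> x j \<subseteq> x i)}"

definition completion :: "('a, 'b) ring_scheme \<Rightarrow> (nat \<Rightarrow> 'a set) \<Rightarrow> (nat \<Rightarrow> 'a set) ring" where
  "completion R I =
    \<lparr>carrier = completion_carrier R I,
     mult = (\<lambda>x y j. x j \<otimes>\<^bsub>R Quot I j\<^esub> y j),
     one = (\<lambda>j. \<one>\<^bsub>R Quot I j\<^esub>),
     ring.zero = (\<lambda>j. \<zero>\<^bsub>R Quot I j\<^esub>),
     ring.add = (\<lambda>x y j. x j \<oplus>\<^bsub>R Quot I j\<^esub> y j)\<rparr>"

definition completion_topology :: "('a, 'b) ring_scheme \<Rightarrow> (nat \<Rightarrow> 'a set) \<Rightarrow> (nat \<Rightarrow> 'a set) topology" where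
  "completion_topology R I =
     subtopology (product_topology (\<lambda>j. discrete_topology (carrier (R Quot I j))) UNIV)
                 (completion_carrier R I)"

end

theory Submission
  imports Defs
begin

fun inL :: "('a,'b) ring_scheme \<Rightarrow> 'a set \<Rightarrow> 'a list \<Rightarrow> 'a \<Rightarrow> bool" where
  "inL R J [] y = (y \<in> J)"
| "inL R J (b#bs) y = (\<exists>r\<in>carrier R. inL R J bs (y \<ominus>\<^bsub>R\<^esub> r \<otimes>\<^bsub>R\<^esub> b))"

context ring begin

lemma idl_add: "ideal J R \<Longrightarrow> a \<in> J \<Longrightarrow> b \<in> J \<Longrightarrow> a \<oplus> b \<in> J"
  by (simp add: additive_subgroup.a_closed ideal.axioms(1))
lemma idl_neg: "ideal J R \<Longrightarrow> a \<in> J \<Longrightarrow> \<ominus> a \<in> J"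
  by (simp add: additive_subgroup.a_inv_closed ideal.axioms(1))
lemma idl_minus: "ideal J R \<Longrightarrow> a \<in> J \<Longrightarrow> b \<in> J \<Longrightarrow> a \<ominus> b \<in> J"
  by (simp add: a_minus_def idl_add idl_neg)
lemma idl_zero: "ideal J R \<Longrightarrow> \<zero> \<in> J"
  by (simp add: additive_subgroup.zero_closed ideal.axioms(1))
lemma idl_carr: "ideal J R \<Longrightarrow> a \<in> J \<Longrightarrow> a \<in> carrier R"
  by (simp add: ideal.Icarr)
lemma idl_lmult: "ideal J R \<Longrightarrow> a \<in> J \<Longrightarrow> x \<in> carrier R \<Longrightarrow> x \<otimes> a \<in> J"
  by (simp add: ideal.I_l_closed)
lemma idl_rmult: "ideal J R \<Longrightarrow> a \<in> J \<Longrightarrow> x \<in> carrier R \<Longrightarrow> a \<otimes> x \<in> J"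
  by (simp add: ideal.I_r_closed)
lemma idl_swap: "ideal J R \<Longrightarrow> a \<in> carrier R \<Longrightarrow> b \<in> carrier R \<Longrightarrow> a \<ominus> b \<in> J \<Longrightarrow> b \<ominus> a \<in> J"
proof -
  assume "ideal J R" "a \<in> carrier R" "b \<in> carrier R" "a \<ominus> b \<in> J"
  moreover have "b \<ominus> a = \<ominus> (a \<ominus> b)" using \<open>a \<in> carrier R\<close> \<open>b \<in> carrier R\<close> by algebra
  ultimately show ?thesis by (simp add: idl_neg)
qed
lemma idl_trans: "ideal J R \<Longrightarrow> a \<in> carrier R \<Longrightarrow> b \<in> carrier R \<Longrightarrow> c \<in> carrier R \<Longrightarrow>
   a \<ominus> b \<in> J \<Longrightarrow> b \<ominus> c \<in> J \<Longrightarrow> a \<ominus> c \<in> J"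
proof -
  assume "ideal J R" "a \<in> carrier R" "b \<in> carrier R" "c \<in> carrier R" "a \<ominus> b \<in> J" "b \<ominus> c \<in> J"
  moreover have "a \<ominus> c = (a \<ominus> b) \<oplus> (b \<ominus> c)" using \<open>a \<in> carrier R\<close> \<open>b \<in> carrier R\<close> \<open>c \<in> carrier R\<close> by algebra
  ultimately show ?thesis by (simp add: idl_add)
qed

lemma inL_shift:
  assumes "ideal J R" "set bs \<subseteq> carrier R" "inL R J bs y" "y \<in> carrier R" "y' \<in> carrier R" "y \<ominus> y' \<in> J"
  shows "inL R J bs y'"
  using assms(2-)
proof (induction bs arbitrary: y y')
  case Nil
  then have "y \<ominus> (y \<ominus> y') \<in> J" using assms(1) by (simp add: idl_minus)
  moreover have "y \<ominus> (y \<ominus> y') = y'" using Nil by algebra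
  ultimately show ?case by simp
next
  case (Cons b bs)
  then obtain r where r: "r \<in> carrier R" "inL R J bs (y \<ominus> r \<otimes> b)" by auto
  have b: "b \<in> carrier R" using Cons.prems by auto
  have eq: "(y \<ominus> r \<otimes> b) \<ominus> (y' \<ominus> r \<otimes> b) = y \<ominus> y'" using r Cons.prems b by algebra
  have "inL R J bs (y' \<ominus> r \<otimes> b)" using Cons.IH[of "y \<ominus> r \<otimes> b" "y' \<ominus> r \<otimes> b"] r b Cons.prems eq by auto
  then show ?case using r by auto
qed

lemma inL_shift':
  assumes "ideal J R" "set bs \<subseteq> carrier R" "inL R J bs y" "y \<in> carrier R" "y' \<in> carrier R" "y' \<ominus> y \<in> J"
  shows "inL R J bs y'"
  using inL_shift[OF assms(1-5)] idl_swap[OF assms(1) assms(5) assms(4) assms(6)] by simp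

lemma inL_mono: "J \<subseteq> J' \<Longrightarrow> inL R J bs y \<Longrightarrow> inL R J' bs y"
  by (induction bs arbitrary: y) auto

lemma inL_J: "ideal J R \<Longrightarrow> set bs \<subseteq> carrier R \<Longrightarrow> y \<in> J \<Longrightarrow> inL R J bs y"
proof (induction bs arbitrary: y)
  case Nil then show ?case by simp
next
  case (Cons b bs)
  have "y \<in> carrier R" "b \<in> carrier R" using Cons idl_carr by auto
  then have "y \<ominus> \<zero> \<otimes> b = y" by algebra
  then show ?case using Cons by (auto intro!: bexI[of _ \<zero>])
qed

lemma inL_change:
  assumes "ideal J R" "\<forall>b\<in>set bs. f b \<in> carrier R \<and> g b \<in> carrier R \<and> f b \<ominus> g b \<in> J"
    "inL R J (map f bs) y" "y \<in> carrier R"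
  shows "inL R J (map g bs) y"
  using assms(2-)
proof (induction bs arbitrary: y)
  case Nil then show ?case by simp
next
  case (Cons b bs)
  then obtain r where r: "r \<in> carrier R" "inL R J (map f bs) (y \<ominus> r \<otimes> f b)" by auto
  have c: "f b \<in> carrier R" "g b \<in> carrier R" "f b \<ominus> g b \<in> J" using Cons by auto
  have 1: "inL R J (map g bs) (y \<ominus> r \<otimes> f b)" using Cons r c by auto
  have "(y \<ominus> r \<otimes> f b) \<ominus> (y \<ominus> r \<otimes> g b) = \<ominus> (r \<otimes> (f b \<ominus> g b))" using c r Cons by algebra
  moreover have "\<ominus> (r \<otimes> (f b \<ominus> g b)) \<in> J" using c r assms(1) idl_lmult idl_neg by blast
  ultimately have "inL R J (map g bs) (y \<ominus> r \<otimes> g b)"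
    using inL_shift[OF assms(1) _ 1, of "y \<ominus> r \<otimes> g b"] Cons.prems c r by auto
  then show ?case using r by auto
qed

lemma inL_add:
  assumes "ideal J R" "set bs \<subseteq> carrier R"
  shows "inL R J bs y \<Longrightarrow> inL R J bs z \<Longrightarrow> y \<in> carrier R \<Longrightarrow> z \<in> carrier R \<Longrightarrow> inL R J bs (y \<oplus> z)"
  using assms(2)
proof (induction bs arbitrary: y z)
  case Nil then show ?case using assms(1) by (simp add: idl_add)
next
  case (Cons b bs)
  then obtain r s where r: "r \<in> carrier R" "inL R J bs (y \<ominus> r \<otimes> b)"
     and s: "s \<in> carrier R" "inL R J bs (z \<ominus> s \<otimes> b)" by auto
  have "(y \<oplus> z) \<ominus> (r \<oplus> s) \<otimes> b = (y \<ominus> r \<otimes> b) \<oplus> (z \<ominus> s \<otimes> b)"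
    using r s Cons.prems by simp algebra
  then show ?case using Cons r s by (auto intro!: bexI[of _ "r \<oplus> s"])
qed

lemma inL_neg:
  assumes "ideal J R" "set bs \<subseteq> carrier R"
  shows "inL R J bs y \<Longrightarrow> y \<in> carrier R \<Longrightarrow> inL R J bs (\<ominus> y)"
  using assms(2)
proof (induction bs arbitrary: y)
  case Nil then show ?case using assms(1) by (simp add: idl_neg)
next
  case (Cons b bs)
  then obtain r where r: "r \<in> carrier R" "inL R J bs (y \<ominus> r \<otimes> b)" by auto
  have "(\<ominus> y) \<ominus> (\<ominus> r) \<otimes> b = \<ominus> (y \<ominus> r \<otimes> b)" using r Cons.prems by simp algebra
  then show ?case using Cons r by (auto intro!: bexI[of _ "\<ominus> r"])
qed

lemma inL_minus:
  assumes "ideal J R" "set bs \<subseteq> carrier R"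
  shows "inL R J bs y \<Longrightarrow> inL R J bs z \<Longrightarrow> y \<in> carrier R \<Longrightarrow> z \<in> carrier R \<Longrightarrow> inL R J bs (y \<ominus> z)"
  unfolding a_minus_def using inL_add[OF assms] inL_neg[OF assms] by simp

lemma inL_lmult:
  assumes "ideal J R" "set bs \<subseteq> carrier R" "c \<in> carrier R"
  shows "inL R J bs y \<Longrightarrow> y \<in> carrier R \<Longrightarrow> inL R J bs (c \<otimes> y)"
  using assms(2)
proof (induction bs arbitrary: y)
  case Nil then show ?case using assms by (simp add: idl_lmult)
next
  case (Cons b bs)
  then obtain r where r: "r \<in> carrier R" "inL R J bs (y \<ominus> r \<otimes> b)" by auto
  have "c \<otimes> y \<ominus> (c \<otimes> r) \<otimes> b = c \<otimes> (y \<ominus> r \<otimes> b)" using r Cons.prems assms by simp algebra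
  then show ?case using Cons r assms by (auto intro!: bexI[of _ "c \<otimes> r"])
qed

lemma inL_mem:
  assumes "ideal J R" "set bs \<subseteq> carrier R" "b \<in> set bs"
  shows "inL R J bs b"
  using assms(2,3)
proof (induction bs)
  case Nil then show ?case by simp
next
  case (Cons c bs)
  show ?case
  proof (cases "b = c")
    case True
    have "b \<ominus> \<one> \<otimes> c = \<zero>" using True Cons.prems by simp algebra
    moreover have "inL R J bs \<zero>" using Cons.prems assms(1) by (auto intro!: inL_J idl_zero)
    ultimately have "inL R J bs (b \<ominus> \<one> \<otimes> c)" by simp
    then show ?thesis using one_closed by (simp only: inL.simps) blast
  next
    case False
    have "b \<in> carrier R" using Cons.prems by auto
    then have "b \<ominus> \<zero> \<otimes> c = b" using Cons.prems by simp algebra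
    then show ?thesis using Cons False by (auto intro!: bexI[of _ "\<zero>"])
  qed
qed

end

definition crep :: "('a,'b) ring_scheme \<Rightarrow> (nat \<Rightarrow> 'a set) \<Rightarrow> (nat \<Rightarrow> 'a set) \<Rightarrow> nat \<Rightarrow> 'a" where
  "crep R I x j = (SOME a. a \<in> carrier R \<and> x j = I j +>\<^bsub>R\<^esub> a)"

locale filt = ring R for R :: "('a,'b) ring_scheme" (structure) +
  fixes I :: "nat \<Rightarrow> 'a set"
  assumes I_ideal: "ideal (I t) R" and I_dec: "I (Suc t) \<subseteq> I t"
    and I_art: "left_artinian (R Quot I t)"
begin

lemma I_anti: "i \<le> j \<Longrightarrow> I j \<subseteq> I i"
proof (induction rule: dec_induct)
  case base then show ?case by simp
next
  case (step n) then show ?case using I_dec[of n] by blast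
qed

lemma coset_eq: "a \<in> carrier R \<Longrightarrow> b \<in> carrier R \<Longrightarrow> (I j +> a = I j +> b) \<longleftrightarrow> a \<ominus> b \<in> I j"
  using quotient_eq_iff_same_a_r_cos[OF I_ideal] by simp

lemma coset_mem: "a \<in> carrier R \<Longrightarrow> z \<in> I j +> a \<longleftrightarrow> (\<exists>h\<in>I j. z = h \<oplus> a)"
  by (auto simp: a_r_coset_def')

lemma Qcarr: "carrier (R Quot I j) = (\<lambda>a. I j +> a) ` carrier R"
  by (auto simp: FactRing_def A_RCOSETS_def')

lemma Qmult: "a \<in> carrier R \<Longrightarrow> b \<in> carrier R \<Longrightarrow> (I j +> a) \<otimes>\<^bsub>R Quot I j\<^esub> (I j +> b) = I j +> (a \<otimes> b)"
  using ideal.rcoset_mult_add[OF I_ideal] by (simp add: FactRing_def)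

lemma Qadd: "a \<in> carrier R \<Longrightarrow> b \<in> carrier R \<Longrightarrow> (I j +> a) \<oplus>\<^bsub>R Quot I j\<^esub> (I j +> b) = I j +> (a \<oplus> b)"
  using ideal.a_rcos_sum[OF I_ideal] by (simp add: FactRing_def)

lemma coset_zero: "a \<in> I j \<Longrightarrow> I j +> a = I j"
proof -
  assume a: "a \<in> I j"
  interpret ideal "I j" R by (rule I_ideal)
  show ?thesis using a by (rule a_rcos_const)
qed

lemma coset_self: "a \<in> carrier R \<Longrightarrow> a \<in> I j +> a"
proof -
  assume a: "a \<in> carrier R"
  interpret ideal "I j" R by (rule I_ideal)
  show ?thesis using a by (rule a_rcos_self)
qed

lemma C_carr: "carrier (completion R I) = completion_carrier R I"
  by (simp add: completion_def)
lemma C_mult: "x \<otimes>\<^bsub>completion R I\<^esub> y = (\<lambda>j. x j \<otimes>\<^bsub>R Quot I j\<^esub> y j)"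
  by (simp add: completion_def)
lemma C_add: "x \<oplus>\<^bsub>completion R I\<^esub> y = (\<lambda>j. x j \<oplus>\<^bsub>R Quot I j\<^esub> y j)"
  by (simp add: completion_def)
lemma C_zero: "\<zero>\<^bsub>completion R I\<^esub> = (\<lambda>j. I j)"
  by (simp add: completion_def FactRing_def)

lemma rep_spec: "x j \<in> carrier (R Quot I j) \<Longrightarrow> crep R I x j \<in> carrier R \<and> x j = I j +> crep R I x j"
proof -
  assume "x j \<in> carrier (R Quot I j)"
  then obtain a where "a \<in> carrier R" "x j = I j +> a" by (auto simp: Qcarr)
  then show ?thesis unfolding crep_def
    by (rule someI[where P="\<lambda>a. a \<in> carrier R \<and> x j = I j +> a", OF conjI])
qed

lemma rep_of: "a \<in> carrier R \<Longrightarrow> x j = I j +> a \<Longrightarrow> crep R I x j \<ominus> a \<in> I j"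
proof -
  assume a: "a \<in> carrier R" "x j = I j +> a"
  then have "x j \<in> carrier (R Quot I j)" by (auto simp: Qcarr)
  from rep_spec[of x j, OF this] a have "crep R I x j \<in> carrier R" "I j +> crep R I x j = I j +> a" by auto
  then show ?thesis using coset_eq a(1) by blast
qed

lemma CcarD: "x \<in> completion_carrier R I \<Longrightarrow> x j \<in> carrier (R Quot I j)"
  "x \<in> completion_carrier R I \<Longrightarrow> i \<le> j \<Longrightarrow> x j \<subseteq> x i"
  by (auto simp: completion_carrier_def)

lemma rep_carr: "x \<in> completion_carrier R I \<Longrightarrow> crep R I x j \<in> carrier R"
  using rep_spec CcarD by blast
lemma rep_eq: "x \<in> completion_carrier R I \<Longrightarrow> x j = I j +> crep R I x j"
  using rep_spec CcarD by blast

lemma rep_compat: "x \<in> completion_carrier R I \<Longrightarrow> i \<le> j \<Longrightarrow> crep R I x j \<ominus> crep R I x i \<in> I i"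
proof -
  assume x: "x \<in> completion_carrier R I" and ij: "i \<le> j"
  let ?a = "crep R I x j" and ?b = "crep R I x i"
  have ab: "?a \<in> carrier R" "?b \<in> carrier R" using rep_carr x by auto
  have "?a \<in> x j" using coset_self[OF ab(1)] rep_eq[OF x] by simp
  then have "?a \<in> I i +> ?b" using CcarD(2)[OF x ij] rep_eq[OF x, of i] by auto
  then obtain h where h: "h \<in> I i" "?a = h \<oplus> ?b" using coset_mem ab by blast
  have "h \<in> carrier R" using h idl_carr I_ideal by blast
  then have "?a \<ominus> ?b = h" using h ab by simp algebra
  then show ?thesis using h by simp
qed

lemma mk_mem:
  assumes f: "\<And>j. f j \<in> carrier R" and c: "\<And>i j. i \<le> j \<Longrightarrow> f j \<ominus> f i \<in> I i"
  shows "(\<lambda>j. I j +> f j) \<in> completion_carrier R I"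
  unfolding completion_carrier_def
proof (intro CollectI conjI allI impI)
  fix j show "I j +> f j \<in> carrier (R Quot I j)" using f by (auto simp: Qcarr)
next
  fix i j :: nat assume ij: "i \<le> j"
  show "I j +> f j \<subseteq> I i +> f i"
  proof
    fix z assume "z \<in> I j +> f j"
    then obtain h where h: "h \<in> I j" "z = h \<oplus> f j" using coset_mem f by blast
    have hi: "h \<in> I i" using h I_anti[OF ij] by blast
    have hc: "h \<in> carrier R" using h idl_carr I_ideal by blast
    have "z = (h \<oplus> (f j \<ominus> f i)) \<oplus> f i" using h hc f by simp algebra
    moreover have "h \<oplus> (f j \<ominus> f i) \<in> I i" using hi c[OF ij] idl_add I_ideal by blast
    ultimately show "z \<in> I i +> f i" using coset_mem f by blast
  qed
qed

lemma chain_compat: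
  assumes f: "\<And>j. f j \<in> carrier R" and c: "\<And>j. f (Suc j) \<ominus> f j \<in> I j" and ij: "i \<le> j"
  shows "f j \<ominus> f i \<in> I i"
  using ij
proof (induction rule: dec_induct)
  case base
  have "f i \<ominus> f i = \<zero>" using f by simp algebra
  then show ?case using idl_zero I_ideal by simp
next
  case (step n)
  have "f (Suc n) \<ominus> f n \<in> I i" using c I_anti[OF step(1)] by blast
  then show ?case using idl_trans[OF I_ideal f f f _ step(3)] by blast
qed

lemma C_ext:
  assumes "x \<in> completion_carrier R I" "y \<in> completion_carrier R I"
    "\<And>j. crep R I x j \<ominus> crep R I y j \<in> I j"
  shows "x = y"
proof
  fix j
  have "I j +> crep R I x j = I j +> crep R I y j"
    using coset_eq[OF rep_carr[OF assms(1)] rep_carr[OF assms(2)]] assms(3) by blast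
  then show "x j = y j" using rep_eq[OF assms(1), of j] rep_eq[OF assms(2), of j] by simp

qed

lemma C_add_eq: "x \<in> completion_carrier R I \<Longrightarrow> y \<in> completion_carrier R I \<Longrightarrow>
   x \<oplus>\<^bsub>completion R I\<^esub> y = (\<lambda>j. I j +> (crep R I x j \<oplus> crep R I y j))"
  unfolding C_add
proof (intro ext)
  fix j assume x: "x \<in> completion_carrier R I" and y: "y \<in> completion_carrier R I"
  have "x j \<oplus>\<^bsub>R Quot I j\<^esub> y j = (I j +> crep R I x j) \<oplus>\<^bsub>R Quot I j\<^esub> (I j +> crep R I y j)"
    using rep_eq[OF x] rep_eq[OF y] by simp
  also have "\<dots> = I j +> (crep R I x j \<oplus> crep R I y j)" using Qadd rep_carr x y by blast
  finally show "x j \<oplus>\<^bsub>R Quot I j\<^esub> y j = I j +> (crep R I x j \<oplus> crep R I y j)" .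
qed

lemma C_mult_eq: "x \<in> completion_carrier R I \<Longrightarrow> y \<in> completion_carrier R I \<Longrightarrow>
   x \<otimes>\<^bsub>completion R I\<^esub> y = (\<lambda>j. I j +> (crep R I x j \<otimes> crep R I y j))"
  unfolding C_mult
proof (intro ext)
  fix j assume x: "x \<in> completion_carrier R I" and y: "y \<in> completion_carrier R I"
  have "x j \<otimes>\<^bsub>R Quot I j\<^esub> y j = (I j +> crep R I x j) \<otimes>\<^bsub>R Quot I j\<^esub> (I j +> crep R I y j)"
    using rep_eq[OF x] rep_eq[OF y] by simp
  also have "\<dots> = I j +> (crep R I x j \<otimes> crep R I y j)" using Qmult rep_carr x y by blast
  finally show "x j \<otimes>\<^bsub>R Quot I j\<^esub> y j = I j +> (crep R I x j \<otimes> crep R I y j)" .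
qed

lemma C_add_closed:
  assumes x: "x \<in> completion_carrier R I" and y: "y \<in> completion_carrier R I"
  shows "x \<oplus>\<^bsub>completion R I\<^esub> y \<in> completion_carrier R I"
  unfolding C_add_eq[OF x y]
proof (rule mk_mem)
  fix j show "crep R I x j \<oplus> crep R I y j \<in> carrier R" using rep_carr x y by simp
next
  fix i j :: nat assume ij: "i \<le> j"
  have c: "crep R I x j \<in> carrier R" "crep R I x i \<in> carrier R" "crep R I y j \<in> carrier R" "crep R I y i \<in> carrier R"
    using rep_carr x y by auto
  have "(crep R I x j \<oplus> crep R I y j) \<ominus> (crep R I x i \<oplus> crep R I y i) =
    (crep R I x j \<ominus> crep R I x i) \<oplus> (crep R I y j \<ominus> crep R I y i)" using c by algebra
  then show "(crep R I x j \<oplus> crep R I y j) \<ominus> (crep R I x i \<oplus> crep R I y i) \<in> I i"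
    using rep_compat[OF x ij] rep_compat[OF y ij] idl_add I_ideal by simp
qed

lemma C_mult_closed:
  assumes x: "x \<in> completion_carrier R I" and y: "y \<in> completion_carrier R I"
  shows "x \<otimes>\<^bsub>completion R I\<^esub> y \<in> completion_carrier R I"
  unfolding C_mult_eq[OF x y]
proof (rule mk_mem)
  fix j show "crep R I x j \<otimes> crep R I y j \<in> carrier R" using rep_carr x y by simp
next
  fix i j :: nat assume ij: "i \<le> j"
  have c: "crep R I x j \<in> carrier R" "crep R I x i \<in> carrier R" "crep R I y j \<in> carrier R" "crep R I y i \<in> carrier R"
    using rep_carr x y by auto
  have "(crep R I x j \<otimes> crep R I y j) \<ominus> (crep R I x i \<otimes> crep R I y i) =
    (crep R I x j \<ominus> crep R I x i) \<otimes> crep R I y j \<oplus> crep R I x i \<otimes> (crep R I y j \<ominus> crep R I y i)" using c by algebra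
  then show "(crep R I x j \<otimes> crep R I y j) \<ominus> (crep R I x i \<otimes> crep R I y i) \<in> I i"
    using rep_compat[OF x ij] rep_compat[OF y ij] idl_add idl_lmult idl_rmult I_ideal c by simp
qed

end

lemma dep_choice:
  assumes "S 0 \<noteq> {}" "\<And>j r. r \<in> S j \<Longrightarrow> \<exists>r'\<in>S (Suc j). P j r r'"
  shows "\<exists>\<rho>. \<forall>j. \<rho> j \<in> S j \<and> P j (\<rho> j) (\<rho> (Suc j))"
proof -
  define \<rho> where "\<rho> = rec_nat (SOME r. r \<in> S 0) (\<lambda>j r. SOME r'. r' \<in> S (Suc j) \<and> P j r r')"
  have e: "\<rho> 0 = (SOME r. r \<in> S 0)" "\<And>j. \<rho> (Suc j) = (SOME r'. r' \<in> S (Suc j) \<and> P j (\<rho> j) r')"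
    by (simp_all add: \<rho>_def)
  have mem: "\<rho> j \<in> S j \<and> (\<rho> (Suc j) \<in> S (Suc j) \<and> P j (\<rho> j) (\<rho> (Suc j)))" for j
  proof (induction j)
    case 0
    have "\<rho> 0 \<in> S 0" using assms(1) e(1) by (simp add: some_in_eq)
    then show ?case using assms(2)[of "\<rho> 0" 0] e(2)[of 0] someI_ex[of "\<lambda>r'. r' \<in> S (Suc 0) \<and> P 0 (\<rho> 0) r'"] by auto
  next
    case (Suc j)
    then have "\<rho> (Suc j) \<in> S (Suc j)" by blast
    then show ?case using assms(2)[of "\<rho> (Suc j)" "Suc j"] e(2)[of "Suc j"]
      someI_ex[of "\<lambda>r'. r' \<in> S (Suc (Suc j)) \<and> P (Suc j) (\<rho> (Suc j)) r'"] by auto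
  qed
  then show ?thesis by blast
qed

context ring begin

lemma lideal_intro:
  assumes "W \<subseteq> carrier R" "\<zero> \<in> W" "\<And>a b. a \<in> W \<Longrightarrow> b \<in> W \<Longrightarrow> a \<oplus> b \<in> W"
    "\<And>a. a \<in> W \<Longrightarrow> \<ominus> a \<in> W" "\<And>c a. c \<in> carrier R \<Longrightarrow> a \<in> W \<Longrightarrow> c \<otimes> a \<in> W"
  shows "left_ideal R W"
proof -
  have "subgroup W (add_monoid R)"
    by (rule add.subgroupI) (use assms in \<open>auto simp: a_inv_def\<close>)
  then show ?thesis unfolding left_ideal_def using assms(5) by (auto intro: additive_subgroupI)
qed

lemma lideal_props:
  assumes "left_ideal R W"
  shows "W \<subseteq> carrier R" "\<zero> \<in> W" "\<And>a b. a \<in> W \<Longrightarrow> b \<in> W \<Longrightarrow> a \<oplus> b \<in> W"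
    "\<And>a. a \<in> W \<Longrightarrow> \<ominus> a \<in> W" "\<And>c a. c \<in> carrier R \<Longrightarrow> a \<in> W \<Longrightarrow> c \<otimes> a \<in> W"
  using assms unfolding left_ideal_def
  by (auto simp: additive_subgroup.a_subset additive_subgroup.zero_closed additive_subgroup.a_closed
      additive_subgroup.a_inv_closed)

end

context filt begin

lemma sat_sub:
  assumes "left_ideal R W" "left_ideal R W'" "I j \<subseteq> W'"
    "(\<lambda>a. I j +> a) ` W \<subseteq> (\<lambda>a. I j +> a) ` W'"
  shows "W \<subseteq> W'"
proof
  fix w assume w: "w \<in> W"
  then obtain w' where w': "w' \<in> W'" "I j +> w = I j +> w'" using assms(4) by blast
  have c: "w \<in> carrier R" "w' \<in> carrier R" using w w' lideal_props(1)[OF assms(1)] lideal_props(1)[OF assms(2)] by auto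
  have "w \<ominus> w' \<in> W'" using coset_eq[OF c] w' assms(3) by blast
  moreover have "w = (w \<ominus> w') \<oplus> w'" using c by algebra
  ultimately show "w \<in> W'" using lideal_props(3)[OF assms(2)] w' by metis
qed

lemma dcc:
  assumes "\<And>n. left_ideal R (W n)" "\<And>n. I j \<subseteq> W n" "\<And>n. W (Suc n) \<subseteq> W n"
  shows "\<exists>N. \<forall>n\<ge>N. W n = W N"
proof -
  define f where "f n = (\<lambda>a. I j +> a) ` W n" for n
  have "left_ideal (R Quot I j) (f n)" for n
    unfolding left_ideal_def
  proof (intro conjI ballI)
    have "subgroup (W n) (add_monoid R)" using assms(1)[of n] unfolding left_ideal_def
      by (simp add: additive_subgroup.a_subgroup)
    then show "additive_subgroup (f n) (R Quot I j)" unfolding f_def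
      by (intro additive_subgroupI ring_hom_ring.img_is_add_subgroup[OF ideal.rcos_ring_hom_ring[OF I_ideal]])
  next
    fix a x assume a: "a \<in> carrier (R Quot I j)" and x: "x \<in> f n"
    obtain c where c: "c \<in> carrier R" "a = I j +> c" using a by (auto simp: Qcarr)
    obtain w where w: "w \<in> W n" "x = I j +> w" using x f_def by auto
    have wc: "w \<in> carrier R" using w lideal_props(1)[OF assms(1)] by auto
    have "a \<otimes>\<^bsub>R Quot I j\<^esub> x = I j +> (c \<otimes> w)" using c w Qmult wc by simp
    moreover have "c \<otimes> w \<in> W n" using lideal_props(5)[OF assms(1) c(1) w(1)] .
    ultimately show "a \<otimes>\<^bsub>R Quot I j\<^esub> x \<in> f n" unfolding f_def by blast
  qed
  moreover have "f (Suc n) \<subseteq> f n" for n unfolding f_def using assms(3) by blast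
  ultimately obtain N where N: "\<And>n. n \<ge> N \<Longrightarrow> f n = f N"
    using I_art[of j] unfolding left_artinian_def by blast
  have "W n = W N" if "n \<ge> N" for n
    using sat_sub[OF assms(1) assms(1) assms(2), of n N] sat_sub[OF assms(1) assms(1) assms(2), of N n]
      N[OF that] unfolding f_def by blast
  then show ?thesis by blast
qed

end

context filt begin

lemma mittag:
  fixes T K :: "nat \<Rightarrow> 'a set"
  assumes Tc: "\<And>m. T m \<subseteq> carrier R" and Tne: "\<And>m. T m \<noteq> {}" and Tdec: "\<And>j m. j \<le> m \<Longrightarrow> T m \<subseteq> T j"
    and Kid: "\<And>m. left_ideal R (K m)" and KI: "\<And>m. I m \<subseteq> K m" and Kdec: "\<And>m. K (Suc m) \<subseteq> K m"
    and cos: "\<And>m t r. t \<in> T m \<Longrightarrow> r \<in> carrier R \<Longrightarrow> r \<in> T m \<longleftrightarrow> r \<ominus> t \<in> K m"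
  shows "\<exists>\<rho>. \<forall>j. \<rho> j \<in> T j \<and> \<rho> (Suc j) \<ominus> \<rho> j \<in> I j"
proof -
  define W where "W m j = {r \<in> carrier R. \<exists>k\<in>K m. r \<ominus> k \<in> I j}" for m j
  define U where "U m j = {r \<in> carrier R. \<exists>t\<in>T m. r \<ominus> t \<in> I j}" for m j
  note Kp = lideal_props[OF Kid]
  have Kc: "k \<in> K m \<Longrightarrow> k \<in> carrier R" for k m using Kp(1) by blast
  have Ic: "h \<in> I j \<Longrightarrow> h \<in> carrier R" for h j using idl_carr I_ideal by blast
  have Wid: "left_ideal R (W m j)" for m j
  proof (rule lideal_intro)
    show "W m j \<subseteq> carrier R" unfolding W_def by blast
    have eq: "\<zero> \<ominus> \<zero> = \<zero>" by algebra
    show "\<zero> \<in> W m j" unfolding W_def using Kp(2)[of m] idl_zero[OF I_ideal, of j]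
      by (intro CollectI conjI zero_closed bexI[of _ "\<zero>"]) (auto simp: eq)
  next
    fix a b assume "a \<in> W m j" "b \<in> W m j"
    then obtain k k' where k: "k \<in> K m" "a \<ominus> k \<in> I j" "k' \<in> K m" "b \<ominus> k' \<in> I j" "a \<in> carrier R" "b \<in> carrier R"
      unfolding W_def by blast
    have "(a \<oplus> b) \<ominus> (k \<oplus> k') = (a \<ominus> k) \<oplus> (b \<ominus> k')" using k Kc by algebra
    then have "(a \<oplus> b) \<ominus> (k \<oplus> k') \<in> I j" using k idl_add[OF I_ideal] by simp
    then show "a \<oplus> b \<in> W m j" unfolding W_def using k Kp(3) by auto
  next
    fix a assume "a \<in> W m j"
    then obtain k where k: "k \<in> K m" "a \<ominus> k \<in> I j" "a \<in> carrier R" unfolding W_def by blast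
    have "(\<ominus> a) \<ominus> (\<ominus> k) = \<ominus> (a \<ominus> k)" using k Kc by algebra
    then have "(\<ominus> a) \<ominus> (\<ominus> k) \<in> I j" using k idl_neg[OF I_ideal] by simp
    then show "\<ominus> a \<in> W m j" unfolding W_def using k Kp(4) by auto
  next
    fix c a assume c: "c \<in> carrier R" and "a \<in> W m j"
    then obtain k where k: "k \<in> K m" "a \<ominus> k \<in> I j" "a \<in> carrier R" unfolding W_def by blast
    have "c \<otimes> a \<ominus> c \<otimes> k = c \<otimes> (a \<ominus> k)" using k Kc c by algebra
    then have "c \<otimes> a \<ominus> c \<otimes> k \<in> I j" using k c idl_lmult[OF I_ideal] by simp
    then show "c \<otimes> a \<in> W m j" unfolding W_def using k c Kp(5) by auto
  qed
  have WI: "I j \<subseteq> W m j" for m j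
  proof
    fix r assume r: "r \<in> I j"
    have eq: "r \<ominus> \<zero> = r" using Ic[OF r] by algebra
    show "r \<in> W m j" unfolding W_def using r Ic[OF r] Kp(2)[of m]
      by (intro CollectI conjI bexI[of _ "\<zero>"]) (auto simp: eq)
  qed
  have Wdec: "W (Suc m) j \<subseteq> W m j" for m j unfolding W_def using Kdec by blast
  have "\<forall>j. \<exists>N. \<forall>n\<ge>N. W n j = W N j"
  proof
    fix j show "\<exists>N. \<forall>n\<ge>N. W n j = W N j"
      using dcc[of "\<lambda>n. W n j" j, OF Wid WI Wdec] by blast
  qed
  then obtain N where N: "\<And>j n. n \<ge> N j \<Longrightarrow> W n j = W (N j) j" by metis
  have Ucos: "U m j = {r \<in> carrier R. r \<ominus> t \<in> W m j}" if t: "t \<in> T m" for t m j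
  proof (rule equalityI; rule subsetI)
    fix r assume "r \<in> U m j"
    then obtain t' where t': "t' \<in> T m" "r \<ominus> t' \<in> I j" "r \<in> carrier R" unfolding U_def by blast
    have tc: "t \<in> carrier R" "t' \<in> carrier R" using t t' Tc by auto
    have k: "t' \<ominus> t \<in> K m" using cos[OF t tc(2)] t' by blast
    have eq: "(r \<ominus> t) \<ominus> (t' \<ominus> t) = r \<ominus> t'" using tc t' by algebra
    show "r \<in> {r \<in> carrier R. r \<ominus> t \<in> W m j}" unfolding W_def using k t' tc
      by (intro CollectI conjI minus_closed bexI[of _ "t' \<ominus> t"]) (auto simp: eq)
  next
    fix r assume "r \<in> {r \<in> carrier R. r \<ominus> t \<in> W m j}"
    then obtain k where k: "k \<in> K m" "(r \<ominus> t) \<ominus> k \<in> I j" "r \<in> carrier R" unfolding W_def by blast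
    have tc: "t \<in> carrier R" "k \<in> carrier R" using t Tc k Kc by auto
    have "(t \<oplus> k) \<ominus> t = k" using tc by algebra
    then have t': "t \<oplus> k \<in> T m" using cos[OF t, of "t \<oplus> k"] tc k by simp
    have eq: "r \<ominus> (t \<oplus> k) = (r \<ominus> t) \<ominus> k" using tc k by algebra
    show "r \<in> U m j" unfolding U_def using k t'
      by (intro CollectI conjI bexI[of _ "t \<oplus> k"]) (auto simp: eq)
  qed
  have Ustab: "U n j = U (N j) j" if n: "n \<ge> N j" for n j
  proof -
    obtain t where t: "t \<in> T n" using Tne by blast
    have t2: "t \<in> T (N j)" using Tdec[OF n] t by blast
    show ?thesis using Ucos[OF t] Ucos[OF t2] N[OF n] by simp
  qed
  define S where "S j = U (N j) j" for j
  have S_sub: "S j \<subseteq> T j" for j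
  proof
    fix r assume r: "r \<in> S j"
    let ?m = "max j (N j)"
    have "r \<in> U ?m j" using r Ustab[of j ?m] unfolding S_def by simp
    then obtain t where t: "t \<in> T ?m" "r \<ominus> t \<in> I j" "r \<in> carrier R" unfolding U_def by blast
    have tj: "t \<in> T j" using t Tdec[of j ?m] by auto
    have "r \<ominus> t \<in> K j" using t KI by blast
    then show "r \<in> T j" using cos[OF tj t(3)] by blast
  qed
  have S_ne: "S j \<noteq> {}" for j
  proof -
    obtain t where t: "t \<in> T (N j)" using Tne by blast
    have tc: "t \<in> carrier R" using t Tc by blast
    then have eq: "t \<ominus> t = \<zero>" by algebra
    have "t \<in> S j" unfolding S_def U_def using t tc idl_zero[OF I_ideal, of j]
      by (intro CollectI conjI bexI[of _ t]) (auto simp: eq)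
    then show ?thesis by blast
  qed
  have S_step: "\<exists>r'\<in>S (Suc j). r' \<ominus> r \<in> I j" if r: "r \<in> S j" for j r
  proof -
    let ?m = "max (N j) (N (Suc j))"
    have "r \<in> U ?m j" using r Ustab[of j ?m] unfolding S_def by simp
    then obtain t where t: "t \<in> T ?m" "r \<ominus> t \<in> I j" "r \<in> carrier R" unfolding U_def by blast
    have tc: "t \<in> carrier R" using t Tc by blast
    then have eq: "t \<ominus> t = \<zero>" by algebra
    have "t \<in> U ?m (Suc j)" unfolding U_def using t tc idl_zero[OF I_ideal, of "Suc j"]
      by (intro CollectI conjI bexI[of _ t]) (auto simp: eq)
    then have "t \<in> S (Suc j)" using Ustab[of "Suc j" ?m] unfolding S_def by simp
    moreover have "t \<ominus> r \<in> I j" using idl_swap[OF I_ideal t(3) tc t(2)] .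
    ultimately show ?thesis by blast
  qed
  obtain \<rho> where "\<forall>j. \<rho> j \<in> S j \<and> \<rho> (Suc j) \<ominus> \<rho> j \<in> I j"
    using dep_choice[of S "\<lambda>j r r'. r' \<ominus> r \<in> I j", OF S_ne S_step] by blast
  then show ?thesis using S_sub by blast
qed

end

fun gen :: "('c,'d) ring_scheme \<Rightarrow> 'c list \<Rightarrow> 'c set" where
  "gen S [] = {\<zero>\<^bsub>S\<^esub>}"
| "gen S (a#as) = {r \<otimes>\<^bsub>S\<^esub> a \<oplus>\<^bsub>S\<^esub> z | r z. r \<in> carrier S \<and> z \<in> gen S as}"

lemma gen_sub: "left_ideal S L \<Longrightarrow> set as \<subseteq> L \<Longrightarrow> gen S as \<subseteq> L"
proof (induction as)
  case Nil then show ?case unfolding left_ideal_def by (simp add: additive_subgroup.zero_closed)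
next
  case (Cons a as)
  then show ?case unfolding left_ideal_def by (auto intro!: additive_subgroup.a_closed)
qed

context filt begin

lemma lvl:
  assumes bs: "set bs \<subseteq> completion_carrier R I" and jm: "j \<le> m"
    and v: "v \<in> carrier R" "v' \<in> carrier R" "v \<ominus> v' \<in> I j"
    and h: "inL R (I m) (map (\<lambda>b. crep R I b m) bs) v"
  shows "inL R (I j) (map (\<lambda>b. crep R I b j) bs) v'"
proof -
  have "inL R (I j) (map (\<lambda>b. crep R I b m) bs) v" using inL_mono[OF I_anti[OF jm] h] .
  moreover have hb: "\<forall>b\<in>set bs. crep R I b m \<in> carrier R \<and> crep R I b j \<in> carrier R \<and> crep R I b m \<ominus> crep R I b j \<in> I j"
  proof
    fix b assume "b \<in> set bs"
    then have b: "b \<in> completion_carrier R I" using bs by blast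
    show "crep R I b m \<in> carrier R \<and> crep R I b j \<in> carrier R \<and> crep R I b m \<ominus> crep R I b j \<in> I j"
      using rep_carr[OF b] rep_compat[OF b jm] by simp
  qed
  ultimately have h2: "inL R (I j) (map (\<lambda>b. crep R I b j) bs) v"
    using inL_change[OF I_ideal hb _ v(1)] by simp
  have "set (map (\<lambda>b. crep R I b j) bs) \<subseteq> carrier R" using bs rep_carr by auto
  then show ?thesis using inL_shift[OF I_ideal _ h2 v] by simp
qed

end

context filt begin
lemma main:
  "set as \<subseteq> completion_carrier R I \<Longrightarrow> y \<in> completion_carrier R I \<Longrightarrow>
   (\<And>j. inL R (I j) (map (\<lambda>a. crep R I a j) as) (crep R I y j)) \<Longrightarrow> y \<in> gen (completion R I) as"
proof (induction as arbitrary: y)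
  case Nil
  have "y = (\<lambda>j. I j)"
  proof
    fix j have "crep R I y j \<in> I j" using Nil(3)[of j] by simp
    then have "I j +> crep R I y j = I j" by (rule coset_zero)
    then show "y j = I j" using rep_eq[OF Nil(2), of j] by simp
  qed
  then show ?case by (simp add: C_zero)
next
  case (Cons a bs)
  have a: "a \<in> completion_carrier R I" and bs: "set bs \<subseteq> completion_carrier R I" using Cons.prems by auto
  note y = Cons.prems(2)
  define yj where "yj j = crep R I y j" for j
  define aj where "aj j = crep R I a j" for j
  define B where "B j = map (\<lambda>b. crep R I b j) bs" for j
  have yc: "yj j \<in> carrier R" and ac: "aj j \<in> carrier R" for j unfolding yj_def aj_def using rep_carr a y by auto
  have Bc: "set (B j) \<subseteq> carrier R" for j unfolding B_def using bs rep_carr by auto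
  have ycomp: "yj m \<ominus> yj j \<in> I j" and acomp: "aj m \<ominus> aj j \<in> I j" if "j \<le> m" for j m
    unfolding yj_def aj_def using rep_compat that a y by auto
  have hyp: "inL R (I j) (aj j # B j) (yj j)" for j using Cons.prems(3)[of j] unfolding yj_def aj_def B_def by simp
  have lvl': "inL R (I j) (B j) v'" if "j \<le> m" "v \<in> carrier R" "v' \<in> carrier R" "v \<ominus> v' \<in> I j"
     "inL R (I m) (B m) v" for j m v v'
    using lvl[OF bs that(1-4)] that(5) unfolding B_def by blast
  define T where "T m = {r \<in> carrier R. inL R (I m) (B m) (yj m \<ominus> r \<otimes> aj m)}" for m
  define K where "K m = {r \<in> carrier R. inL R (I m) (B m) (r \<otimes> aj m)}" for m
  have ex: "\<exists>\<rho>. \<forall>j. \<rho> j \<in> T j \<and> \<rho> (Suc j) \<ominus> \<rho> j \<in> I j"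
  proof (rule mittag[where K=K])
    show "T m \<subseteq> carrier R" for m unfolding T_def by blast
    show "T m \<noteq> {}" for m using hyp[of m] unfolding T_def by auto
  next
    fix j m :: nat assume jm: "j \<le> m"
    show "T m \<subseteq> T j"
    proof
      fix r assume "r \<in> T m"
      then have r: "r \<in> carrier R" "inL R (I m) (B m) (yj m \<ominus> r \<otimes> aj m)" unfolding T_def by auto
      have eq: "(yj m \<ominus> r \<otimes> aj m) \<ominus> (yj j \<ominus> r \<otimes> aj j) = (yj m \<ominus> yj j) \<ominus> r \<otimes> (aj m \<ominus> aj j)"
        using r yc ac by algebra
      have "(yj m \<ominus> yj j) \<ominus> r \<otimes> (aj m \<ominus> aj j) \<in> I j"
        using idl_minus[OF I_ideal ycomp[OF jm] idl_lmult[OF I_ideal acomp[OF jm] r(1)]] .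
      then have "inL R (I j) (B j) (yj j \<ominus> r \<otimes> aj j)"
        using lvl'[OF jm _ _ _ r(2)] eq r yc ac by simp
      then show "r \<in> T j" unfolding T_def using r by blast
    qed
  next
    fix m
    show "left_ideal R (K m)"
    proof (rule lideal_intro)
      show "K m \<subseteq> carrier R" unfolding K_def by blast
      have "\<zero> \<otimes> aj m = \<zero>" using ac by simp
      then show "\<zero> \<in> K m" unfolding K_def using inL_J[OF I_ideal Bc idl_zero[OF I_ideal]] by simp
    next
      fix x z assume "x \<in> K m" "z \<in> K m"
      then have h: "x \<in> carrier R" "z \<in> carrier R" "inL R (I m) (B m) (x \<otimes> aj m)" "inL R (I m) (B m) (z \<otimes> aj m)"
        unfolding K_def by auto
      have "(x \<oplus> z) \<otimes> aj m = x \<otimes> aj m \<oplus> z \<otimes> aj m" using h ac by algebra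
      then show "x \<oplus> z \<in> K m" unfolding K_def using inL_add[OF I_ideal Bc h(3,4)] h ac by simp
    next
      fix x assume "x \<in> K m"
      then have h: "x \<in> carrier R" "inL R (I m) (B m) (x \<otimes> aj m)" unfolding K_def by auto
      have "(\<ominus> x) \<otimes> aj m = \<ominus> (x \<otimes> aj m)" using h ac by algebra
      then show "\<ominus> x \<in> K m" unfolding K_def using inL_neg[OF I_ideal Bc h(2)] h ac by simp
    next
      fix c x assume c: "c \<in> carrier R" and "x \<in> K m"
      then have h: "x \<in> carrier R" "inL R (I m) (B m) (x \<otimes> aj m)" unfolding K_def by auto
      have "(c \<otimes> x) \<otimes> aj m = c \<otimes> (x \<otimes> aj m)" using h ac c by algebra
      then show "c \<otimes> x \<in> K m" unfolding K_def using inL_lmult[OF I_ideal Bc c h(2)] h ac c by simp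
    qed
  next
    fix m
    show "I m \<subseteq> K m"
    proof
      fix r assume r: "r \<in> I m"
      have rc: "r \<in> carrier R" using r idl_carr I_ideal by blast
      have "r \<otimes> aj m \<in> I m" using idl_rmult[OF I_ideal r ac] .
      then show "r \<in> K m" unfolding K_def using inL_J[OF I_ideal Bc] rc by blast
    qed
  next
    fix m
    show "K (Suc m) \<subseteq> K m"
    proof
      fix r assume "r \<in> K (Suc m)"
      then have r: "r \<in> carrier R" "inL R (I (Suc m)) (B (Suc m)) (r \<otimes> aj (Suc m))" unfolding K_def by auto
      have eq: "r \<otimes> aj (Suc m) \<ominus> r \<otimes> aj m = r \<otimes> (aj (Suc m) \<ominus> aj m)" using r ac by algebra
      have "r \<otimes> (aj (Suc m) \<ominus> aj m) \<in> I m" using idl_lmult[OF I_ideal acomp r(1)] by simp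
      then have "inL R (I m) (B m) (r \<otimes> aj m)" using lvl'[of m "Suc m", OF _ _ _ _ r(2)] eq r ac by simp
      then show "r \<in> K m" unfolding K_def using r by blast
    qed
  next
    fix m t r assume t: "t \<in> T m" and r: "r \<in> carrier R"
    have t': "t \<in> carrier R" "inL R (I m) (B m) (yj m \<ominus> t \<otimes> aj m)" using t unfolding T_def by auto
    have e1: "yj m \<ominus> r \<otimes> aj m = (yj m \<ominus> t \<otimes> aj m) \<ominus> (r \<ominus> t) \<otimes> aj m" using t' r yc ac by algebra
    have e2: "(r \<ominus> t) \<otimes> aj m = (yj m \<ominus> t \<otimes> aj m) \<ominus> (yj m \<ominus> r \<otimes> aj m)" using t' r yc ac by algebra
    show "r \<in> T m \<longleftrightarrow> r \<ominus> t \<in> K m"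
    proof
      assume "r \<in> T m"
      then have "inL R (I m) (B m) (yj m \<ominus> r \<otimes> aj m)" unfolding T_def by auto
      then have "inL R (I m) (B m) ((r \<ominus> t) \<otimes> aj m)"
        using inL_minus[OF I_ideal Bc t'(2)] e2 t' r yc ac by simp
      then show "r \<ominus> t \<in> K m" unfolding K_def using r t' by simp
    next
      assume "r \<ominus> t \<in> K m"
      then have "inL R (I m) (B m) ((r \<ominus> t) \<otimes> aj m)" unfolding K_def by auto
      then have "inL R (I m) (B m) (yj m \<ominus> r \<otimes> aj m)"
        using inL_minus[OF I_ideal Bc t'(2)] e1 t' r yc ac by simp
      then show "r \<in> T m" unfolding T_def using r by simp
    qed
  qed
  then obtain \<rho> where \<rho>: "\<And>j. \<rho> j \<in> T j" "\<And>j. \<rho> (Suc j) \<ominus> \<rho> j \<in> I j" by blast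
  have \<rho>c: "\<rho> j \<in> carrier R" for j using \<rho>(1) unfolding T_def by blast
  have \<rho>comp: "\<rho> j \<ominus> \<rho> i \<in> I i" if "i \<le> j" for i j using chain_compat[OF \<rho>c \<rho>(2) that] .
  define rC where "rC = (\<lambda>j. I j +> \<rho> j)"
  have rC: "rC \<in> completion_carrier R I" unfolding rC_def using mk_mem[OF \<rho>c \<rho>comp] .
  define v where "v j = yj j \<ominus> \<rho> j \<otimes> aj j" for j
  have vc: "v j \<in> carrier R" for j unfolding v_def using yc ac \<rho>c by simp
  define y' where "y' = (\<lambda>j. I j +> v j)"
  have y': "y' \<in> completion_carrier R I" unfolding y'_def
  proof (rule mk_mem[OF vc])
    fix i j :: nat assume ij: "i \<le> j"
    have eq: "v j \<ominus> v i = (yj j \<ominus> yj i) \<ominus> ((\<rho> j \<ominus> \<rho> i) \<otimes> aj j \<oplus> \<rho> i \<otimes> (aj j \<ominus> aj i))"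
      unfolding v_def using yc ac \<rho>c by algebra
    have "(\<rho> j \<ominus> \<rho> i) \<otimes> aj j \<oplus> \<rho> i \<otimes> (aj j \<ominus> aj i) \<in> I i"
      using idl_add[OF I_ideal idl_rmult[OF I_ideal \<rho>comp[OF ij] ac] idl_lmult[OF I_ideal acomp[OF ij] \<rho>c]] .
    then show "v j \<ominus> v i \<in> I i" using eq idl_minus[OF I_ideal ycomp[OF ij]] by simp
  qed
  have "inL R (I j) (B j) (crep R I y' j)" for j
  proof -
    have "inL R (I j) (B j) (v j)" using \<rho>(1)[of j] unfolding T_def v_def by simp
    moreover have "crep R I y' j \<ominus> v j \<in> I j" using rep_of[OF vc] unfolding y'_def by simp
    ultimately show ?thesis using inL_shift'[OF I_ideal Bc _ vc rep_carr[OF y']] by blast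
  qed
  then have IH: "y' \<in> gen (completion R I) bs" using Cons.IH[OF bs y'] unfolding B_def by blast
  have yeq: "y = rC \<otimes>\<^bsub>completion R I\<^esub> a \<oplus>\<^bsub>completion R I\<^esub> y'"
  proof (rule ext)
    fix j
    have aj_eq: "a j = I j +> aj j" unfolding aj_def using rep_eq[OF a] .
    have e0: "\<rho> j \<otimes> aj j \<oplus> v j = yj j" unfolding v_def using \<rho>c ac yc by algebra
    have "(rC \<otimes>\<^bsub>completion R I\<^esub> a \<oplus>\<^bsub>completion R I\<^esub> y') j =
       (rC j \<otimes>\<^bsub>R Quot I j\<^esub> a j) \<oplus>\<^bsub>R Quot I j\<^esub> y' j"
      unfolding C_add C_mult by (rule refl)
    also have "\<dots> = ((I j +> \<rho> j) \<otimes>\<^bsub>R Quot I j\<^esub> (I j +> aj j)) \<oplus>\<^bsub>R Quot I j\<^esub> (I j +> v j)"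
      unfolding rC_def y'_def aj_eq by (rule refl)
    also have "\<dots> = I j +> (\<rho> j \<otimes> aj j \<oplus> v j)" using Qmult[OF \<rho>c ac] Qadd[OF m_closed[OF \<rho>c ac] vc] by simp
    also have "\<dots> = I j +> yj j" by (simp only: e0)
    also have "\<dots> = y j" unfolding yj_def by (rule sym, rule rep_eq[OF y])
    finally show "y j = (rC \<otimes>\<^bsub>completion R I\<^esub> a \<oplus>\<^bsub>completion R I\<^esub> y') j" by (rule sym)
  qed
  have rC': "rC \<in> carrier (completion R I)" using rC C_carr by simp
  have "\<exists>r z. y = r \<otimes>\<^bsub>completion R I\<^esub> a \<oplus>\<^bsub>completion R I\<^esub> z \<and> r \<in> carrier (completion R I) \<and> z \<in> gen (completion R I) bs"
    by (intro exI[of _ rC] exI[of _ y'] conjI yeq rC' IH)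
  then show ?case by simp
qed

end

definition CS :: "('a,'b) ring_scheme \<Rightarrow> (nat \<Rightarrow> 'a set) \<Rightarrow> (nat \<Rightarrow> 'a set) list \<Rightarrow> (nat \<Rightarrow> 'a set) set" where
  "CS R I as = {y \<in> completion_carrier R I. \<forall>j. inL R (I j) (map (\<lambda>a. crep R I a j) as) (crep R I y j)}"

context filt begin

lemma Bcarr: "set as \<subseteq> completion_carrier R I \<Longrightarrow> set (map (\<lambda>a. crep R I a j) as) \<subseteq> carrier R"
  using rep_carr by auto

lemma CS_intro:
  assumes as: "set as \<subseteq> completion_carrier R I" and y: "y \<in> completion_carrier R I"
    and v: "\<And>j. v j \<in> carrier R" and e: "\<And>j. y j = I j +> v j"
    and h: "\<And>j. inL R (I j) (map (\<lambda>a. crep R I a j) as) (v j)"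
  shows "y \<in> CS R I as"
  unfolding CS_def
proof (intro CollectI conjI allI y)
  fix j
  have "crep R I y j \<ominus> v j \<in> I j" using rep_of[OF v e] .
  then show "inL R (I j) (map (\<lambda>a. crep R I a j) as) (crep R I y j)"
    using inL_shift'[OF I_ideal Bcarr[OF as] h v rep_carr[OF y]] by blast
qed

lemma neg_mem: "y \<in> completion_carrier R I \<Longrightarrow> (\<lambda>j. I j +> \<ominus> crep R I y j) \<in> completion_carrier R I"
proof (rule mk_mem)
  fix j assume y: "y \<in> completion_carrier R I"
  show "\<ominus> crep R I y j \<in> carrier R" using rep_carr[OF y] by simp
next
  fix i j :: nat assume y: "y \<in> completion_carrier R I" and ij: "i \<le> j"
  have c: "crep R I y j \<in> carrier R" "crep R I y i \<in> carrier R" using rep_carr[OF y] by auto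
  have "\<ominus> crep R I y j \<ominus> \<ominus> crep R I y i = \<ominus> (crep R I y j \<ominus> crep R I y i)" using c by algebra
  then show "\<ominus> crep R I y j \<ominus> \<ominus> crep R I y i \<in> I i" using idl_neg[OF I_ideal rep_compat[OF y ij]] by simp
qed

lemma zero_mem: "(\<lambda>j. I j) \<in> completion_carrier R I"
proof -
  have "(\<lambda>j. I j +> \<zero>) \<in> completion_carrier R I"
  proof (rule mk_mem)
    fix i j :: nat
    have e: "\<zero> \<ominus> \<zero> = \<zero>" by algebra
    show "\<zero> \<ominus> \<zero> \<in> I i" unfolding e by (rule idl_zero[OF I_ideal])
  qed simp
  moreover have "(\<lambda>j. I j +> \<zero>) = (\<lambda>j. I j)" using coset_zero[OF idl_zero[OF I_ideal]] by simp
  ultimately show ?thesis by simp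
qed

lemma C_inv:
  assumes y: "y \<in> completion_carrier R I"
  shows "inv\<^bsub>add_monoid (completion R I)\<^esub> y = (\<lambda>j. I j +> \<ominus> crep R I y j)"
proof -
  define ny where "ny = (\<lambda>j. I j +> \<ominus> crep R I y j)"
  have ny: "ny \<in> completion_carrier R I" unfolding ny_def using neg_mem[OF y] .
  have c: "crep R I y j \<in> carrier R" for j using rep_carr[OF y] .
  have z1: "crep R I y j \<oplus> \<ominus> crep R I y j = \<zero>" for j using c by algebra
  have z2: "\<ominus> crep R I y j \<oplus> crep R I y j = \<zero>" for j using c by algebra
  have I0: "I j +> \<zero> = I j" for j using coset_zero[OF idl_zero[OF I_ideal]] .
  have s1: "y \<oplus>\<^bsub>completion R I\<^esub> ny = \<zero>\<^bsub>completion R I\<^esub>"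
    unfolding C_add C_zero ny_def
  proof (rule ext)
    fix j
    have "y j \<oplus>\<^bsub>R Quot I j\<^esub> (I j +> \<ominus> crep R I y j) = (I j +> crep R I y j) \<oplus>\<^bsub>R Quot I j\<^esub> (I j +> \<ominus> crep R I y j)"
      using rep_eq[OF y] by simp
    also have "\<dots> = I j +> (crep R I y j \<oplus> \<ominus> crep R I y j)" using Qadd c by simp
    also have "\<dots> = I j" using z1 I0 by simp
    finally show "y j \<oplus>\<^bsub>R Quot I j\<^esub> (I j +> \<ominus> crep R I y j) = I j" .
  qed
  have s2: "ny \<oplus>\<^bsub>completion R I\<^esub> y = \<zero>\<^bsub>completion R I\<^esub>"
    unfolding C_add C_zero ny_def
  proof (rule ext)
    fix j
    have "(I j +> \<ominus> crep R I y j) \<oplus>\<^bsub>R Quot I j\<^esub> y j = (I j +> \<ominus> crep R I y j) \<oplus>\<^bsub>R Quot I j\<^esub> (I j +> crep R I y j)"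
      using rep_eq[OF y] by simp
    also have "\<dots> = I j +> (\<ominus> crep R I y j \<oplus> crep R I y j)" using Qadd c by simp
    also have "\<dots> = I j" using z2 I0 by simp
    finally show "(I j +> \<ominus> crep R I y j) \<oplus>\<^bsub>R Quot I j\<^esub> y j = I j" .
  qed
  have uniq: "n = ny" if n: "n \<in> completion_carrier R I" and e: "y \<oplus>\<^bsub>completion R I\<^esub> n = \<zero>\<^bsub>completion R I\<^esub>" for n
  proof (rule ext)
    fix j
    have cn: "crep R I n j \<in> carrier R" using rep_carr[OF n] .
    have "I j +> (crep R I y j \<oplus> crep R I n j) = I j"
      using fun_cong[OF e, of j] unfolding C_add_eq[OF y n] C_zero by simp
    then have "I j +> (crep R I y j \<oplus> crep R I n j) = I j +> \<zero>" using I0 by simp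
    then have "(crep R I y j \<oplus> crep R I n j) \<ominus> \<zero> \<in> I j" using coset_eq c cn by simp
    moreover have "(crep R I y j \<oplus> crep R I n j) \<ominus> \<zero> = crep R I n j \<ominus> \<ominus> crep R I y j" using c cn by algebra
    ultimately have "I j +> crep R I n j = I j +> \<ominus> crep R I y j" using coset_eq c cn by simp
    then show "n j = ny j" unfolding ny_def using rep_eq[OF n, of j] by simp
  qed
  show ?thesis unfolding m_inv_def ny_def[symmetric]
  proof (rule the_equality)
    show "ny \<in> carrier (add_monoid (completion R I)) \<and> y \<otimes>\<^bsub>add_monoid (completion R I)\<^esub> ny = \<one>\<^bsub>add_monoid (completion R I)\<^esub>
      \<and> ny \<otimes>\<^bsub>add_monoid (completion R I)\<^esub> y = \<one>\<^bsub>add_monoid (completion R I)\<^esub>"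
      using ny s1 s2 by (simp add: C_carr)
  next
    fix n assume "n \<in> carrier (add_monoid (completion R I)) \<and> y \<otimes>\<^bsub>add_monoid (completion R I)\<^esub> n = \<one>\<^bsub>add_monoid (completion R I)\<^esub>
      \<and> n \<otimes>\<^bsub>add_monoid (completion R I)\<^esub> y = \<one>\<^bsub>add_monoid (completion R I)\<^esub>"
    then have "n \<in> completion_carrier R I" "y \<oplus>\<^bsub>completion R I\<^esub> n = \<zero>\<^bsub>completion R I\<^esub>" by (simp_all add: C_carr)
    then show "n = ny" using uniq by blast
  qed
qed

lemma CS_ideal:
  assumes as: "set as \<subseteq> completion_carrier R I"
  shows "left_ideal (completion R I) (CS R I as)"
  unfolding left_ideal_def
proof (intro conjI ballI additive_subgroupI subgroup.intro)
  note B = Bcarr[OF as]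
  have CSD: "y \<in> completion_carrier R I" "inL R (I j) (map (\<lambda>a. crep R I a j) as) (crep R I y j)"
    if "y \<in> CS R I as" for y j using that unfolding CS_def by auto
  show "CS R I as \<subseteq> carrier (add_monoid (completion R I))" unfolding CS_def C_carr by auto
next
  fix x y assume x: "x \<in> CS R I as" and y: "y \<in> CS R I as"
  have xc: "x \<in> completion_carrier R I" and yc: "y \<in> completion_carrier R I" using x y unfolding CS_def by auto
  show "x \<otimes>\<^bsub>add_monoid (completion R I)\<^esub> y \<in> CS R I as"
  proof -
    have "x \<oplus>\<^bsub>completion R I\<^esub> y \<in> CS R I as"
    proof (rule CS_intro[OF as C_add_closed[OF xc yc]])
      fix j
      show "crep R I x j \<oplus> crep R I y j \<in> carrier R" using rep_carr xc yc by simp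
      show "(x \<oplus>\<^bsub>completion R I\<^esub> y) j = I j +> (crep R I x j \<oplus> crep R I y j)" using C_add_eq[OF xc yc] by simp
      show "inL R (I j) (map (\<lambda>a. crep R I a j) as) (crep R I x j \<oplus> crep R I y j)"
        using inL_add[OF I_ideal Bcarr[OF as]] x y rep_carr xc yc unfolding CS_def by simp
    qed
    then show ?thesis by simp
  qed
next
  show "\<one>\<^bsub>add_monoid (completion R I)\<^esub> \<in> CS R I as"
  proof -
    have "(\<lambda>j. I j) \<in> CS R I as"
    proof (rule CS_intro[OF as zero_mem])
      fix j
      show "\<zero> \<in> carrier R" by simp
      show "I j = I j +> \<zero>" using coset_zero[OF idl_zero[OF I_ideal]] by simp
      show "inL R (I j) (map (\<lambda>a. crep R I a j) as) \<zero>" using inL_J[OF I_ideal Bcarr[OF as] idl_zero[OF I_ideal]] .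
    qed
    then show ?thesis by (simp add: C_zero)
  qed
next
  fix y assume y: "y \<in> CS R I as"
  have yc: "y \<in> completion_carrier R I" using y unfolding CS_def by auto
  have "(\<lambda>j. I j +> \<ominus> crep R I y j) \<in> CS R I as"
  proof (rule CS_intro[OF as neg_mem[OF yc]])
    fix j
    show "\<ominus> crep R I y j \<in> carrier R" using rep_carr yc by simp
    show "I j +> \<ominus> crep R I y j = I j +> \<ominus> crep R I y j" ..
    show "inL R (I j) (map (\<lambda>a. crep R I a j) as) (\<ominus> crep R I y j)"
      using inL_neg[OF I_ideal Bcarr[OF as]] y rep_carr yc unfolding CS_def by simp
  qed
  then show "inv\<^bsub>add_monoid (completion R I)\<^esub> y \<in> CS R I as" using C_inv[OF yc] by simp
next
  fix c x assume c: "c \<in> carrier (completion R I)" and x: "x \<in> CS R I as"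
  have xc: "x \<in> completion_carrier R I" using x unfolding CS_def by auto
  have cc: "c \<in> completion_carrier R I" using c C_carr by simp
  show "c \<otimes>\<^bsub>completion R I\<^esub> x \<in> CS R I as"
  proof (rule CS_intro[OF as C_mult_closed[OF cc xc]])
    fix j
    show "crep R I c j \<otimes> crep R I x j \<in> carrier R" using rep_carr xc cc by simp
    show "(c \<otimes>\<^bsub>completion R I\<^esub> x) j = I j +> (crep R I c j \<otimes> crep R I x j)" using C_mult_eq[OF cc xc] by simp
    show "inL R (I j) (map (\<lambda>a. crep R I a j) as) (crep R I c j \<otimes> crep R I x j)"
      using inL_lmult[OF I_ideal Bcarr[OF as] rep_carr[OF cc]] x rep_carr xc unfolding CS_def by simp
  qed
qed

lemma CS_contains:
  assumes as: "set as \<subseteq> completion_carrier R I"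
  shows "set as \<subseteq> CS R I as"
proof
  fix a assume a: "a \<in> set as"
  then have ac: "a \<in> completion_carrier R I" using as by blast
  show "a \<in> CS R I as"
  proof (rule CS_intro[OF as ac])
    fix j
    show "crep R I a j \<in> carrier R" using rep_carr[OF ac] .
    show "a j = I j +> crep R I a j" using rep_eq[OF ac] .
    show "inL R (I j) (map (\<lambda>a. crep R I a j) as) (crep R I a j)"
      using inL_mem[OF I_ideal Bcarr[OF as]] a by simp
  qed
qed

end

context filt begin

lemma CS_closed:
  assumes as: "set as \<subseteq> completion_carrier R I"
  shows "closedin (completion_topology R I) (CS R I as)"
proof -
  define P where "P = product_topology (\<lambda>j. discrete_topology (carrier (R Quot I j))) (UNIV :: nat set)"
  have CP: "completion_carrier R I \<subseteq> topspace P"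
    unfolding P_def by (auto simp: completion_carrier_def PiE_iff)
  have top: "topspace (completion_topology R I) = completion_carrier R I"
    unfolding completion_topology_def P_def[symmetric] using CP by auto
  have "openin (completion_topology R I) (completion_carrier R I - CS R I as)"
  proof (subst openin_subopen, intro ballI)
    fix y assume y: "y \<in> completion_carrier R I - CS R I as"
    then have yc: "y \<in> completion_carrier R I" by blast
    obtain j where nj: "\<not> inL R (I j) (map (\<lambda>a. crep R I a j) as) (crep R I y j)"
      using y unfolding CS_def by blast
    define Ob where "Ob = {z \<in> topspace P. z j \<in> {y j}}"
    have "openin P Ob" unfolding Ob_def P_def
      by (rule openin_continuous_map_preimage[OF continuous_map_product_projection[OF UNIV_I]])
        (use CcarD(1)[OF yc, of j] in simp)
    then have op: "openin (completion_topology R I) (completion_carrier R I \<inter> Ob)"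
      unfolding completion_topology_def P_def[symmetric] by (rule openin_subtopology_Int2)
    have yin: "y \<in> completion_carrier R I \<inter> Ob" unfolding Ob_def using yc CP by auto
    have sub: "completion_carrier R I \<inter> Ob \<subseteq> completion_carrier R I - CS R I as"
    proof
      fix z assume z: "z \<in> completion_carrier R I \<inter> Ob"
      then have zc: "z \<in> completion_carrier R I" and zj: "z j = y j" unfolding Ob_def by auto
      have "crep R I y j \<ominus> crep R I z j \<in> I j"
        using rep_of[OF rep_carr[OF zc], of y j] rep_eq[OF zc, of j] zj by simp
      then have "z \<notin> CS R I as"
        using nj inL_shift'[OF I_ideal Bcarr[OF as] _ rep_carr[OF zc] rep_carr[OF yc]]
        unfolding CS_def by blast
      then show "z \<in> completion_carrier R I - CS R I as" using zc by blast
    qed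
    show "\<exists>T. openin (completion_topology R I) T \<and> y \<in> T \<and> T \<subseteq> completion_carrier R I - CS R I as"
      using op yin sub by blast
  qed
  then show ?thesis unfolding closedin_def top using CS_def by auto
qed

lemma left_main:
  assumes "finite A" "A \<subseteq> carrier (completion R I)"
  shows "closedin (completion_topology R I) (left_genideal (completion R I) A)"
proof -
  obtain as where as_eq: "set as = A" using finite_list[OF assms(1)] by blast
  have as: "set as \<subseteq> completion_carrier R I" using assms(2) as_eq C_carr by simp
  have "left_genideal (completion R I) A = CS R I as"
  proof
    show "left_genideal (completion R I) A \<subseteq> CS R I as"
      unfolding left_genideal_def using CS_ideal[OF as] CS_contains[OF as] as_eq by (intro Inter_lower) auto
  next
    show "CS R I as \<subseteq> left_genideal (completion R I) A"
    proof
      fix x assume x: "x \<in> CS R I as"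
      then have "x \<in> gen (completion R I) as" using main[OF as] unfolding CS_def by blast
      then show "x \<in> left_genideal (completion R I) A"
        unfolding left_genideal_def using gen_sub as_eq by blast
    qed
  qed
  then show ?thesis using CS_closed[OF as] by simp
qed

end

definition oppR :: "('a,'b) ring_scheme \<Rightarrow> ('a,'b) ring_scheme" where
  "oppR R = R\<lparr>mult := (\<lambda>x y. y \<otimes>\<^bsub>R\<^esub> x)\<rparr>"

lemma opp_simps [simp]:
  "carrier (oppR R) = carrier R" "x \<oplus>\<^bsub>oppR R\<^esub> y = x \<oplus>\<^bsub>R\<^esub> y" "\<zero>\<^bsub>oppR R\<^esub> = \<zero>\<^bsub>R\<^esub>"
  "\<one>\<^bsub>oppR R\<^esub> = \<one>\<^bsub>R\<^esub>" "x \<otimes>\<^bsub>oppR R\<^esub> y = y \<otimes>\<^bsub>R\<^esub> x"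
  by (simp_all add: oppR_def)

lemma opp_add_fun [simp]: "ring.add (oppR R) = ring.add R"
  by (simp add: oppR_def)

lemma opp_add_monoid [simp]: "add_monoid (oppR R) = add_monoid R"
  by (simp add: oppR_def)

lemma opp_ring: "ring R \<Longrightarrow> ring (oppR R)"
proof (rule ringI)
  assume r: "ring R"
  show "abelian_group (oppR R)" using ring.is_abelian_group[OF r]
    unfolding abelian_group_def abelian_monoid_def abelian_group_axioms_def by simp
  show "monoid (oppR R)"
    using ring.is_monoid[OF r]
    by (intro monoidI) (auto simp: monoid.m_assoc monoid.m_closed monoid.l_one monoid.r_one monoid.one_closed)
  fix x y z assume "x \<in> carrier (oppR R)" "y \<in> carrier (oppR R)" "z \<in> carrier (oppR R)"
  then show "(x \<oplus>\<^bsub>oppR R\<^esub> y) \<otimes>\<^bsub>oppR R\<^esub> z = x \<otimes>\<^bsub>oppR R\<^esub> z \<oplus>\<^bsub>oppR R\<^esub> y \<otimes>\<^bsub>oppR R\<^esub> z"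
    "z \<otimes>\<^bsub>oppR R\<^esub> (x \<oplus>\<^bsub>oppR R\<^esub> y) = z \<otimes>\<^bsub>oppR R\<^esub> x \<oplus>\<^bsub>oppR R\<^esub> z \<otimes>\<^bsub>oppR R\<^esub> y"
    by (simp_all add: ringE(3,4)[OF r])
qed

lemma opp_ideal: "ideal J R \<Longrightarrow> ideal J (oppR R)"
  unfolding ideal_def ideal_axioms_def additive_subgroup_def
  using opp_ring by auto

lemma opp_rcoset: "J +>\<^bsub>oppR R\<^esub> a = J +>\<^bsub>R\<^esub> a"
  by (simp add: a_r_coset_def)

lemma opp_Quot: "oppR R Quot J = oppR (R Quot J)"
proof -
  have "rcoset_mult (oppR R) J = (\<lambda>A B. rcoset_mult R J B A)"
    unfolding rcoset_mult_def opp_rcoset by (auto intro!: ext)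
  moreover have "a_rcosets\<^bsub>oppR R\<^esub> J = a_rcosets\<^bsub>R\<^esub> J" by (simp add: A_RCOSETS_def)
  moreover have "set_add (oppR R) = set_add R" by (simp add: set_add_def)
  ultimately show ?thesis unfolding FactRing_def oppR_def by (simp add: opp_rcoset[unfolded oppR_def])
qed

lemma opp_ccar: "completion_carrier (oppR R) I = completion_carrier R I"
  unfolding completion_carrier_def opp_Quot by simp

lemma opp_completion: "completion (oppR R) I = oppR (completion R I)"
  unfolding completion_def opp_Quot opp_ccar by (simp add: oppR_def)

lemma opp_topology: "completion_topology (oppR R) I = completion_topology R I"
  unfolding completion_topology_def opp_Quot opp_ccar by simp

lemma opp_right_ideal: "right_ideal S L = left_ideal (oppR S) L"
  unfolding right_ideal_def left_ideal_def additive_subgroup_def by simp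

lemma opp_right_genideal: "right_genideal S A = left_genideal (oppR S) A"
  unfolding right_genideal_def left_genideal_def opp_right_ideal ..

lemma opp_artinian: "left_artinian (oppR S) = right_artinian S"
  unfolding left_artinian_def right_artinian_def opp_right_ideal ..

theorem lemma4p2:
  fixes F :: "('f, 'g) ring_scheme"
    and R :: "('f, 'a, 'b) module_scheme"
    and I :: "nat \<Rightarrow> 'a set"
  assumes "cring F"
    and "F_algebra F R"
    and "descending_filtration R I"
    and "\<And>s. artinian_ring (R Quot I s)"
  shows "\<forall>A. finite A \<and> A \<subseteq> carrier (completion R I) \<longrightarrow>
            closedin (completion_topology R I) (left_genideal (completion R I) A) \<and>
            closedin (completion_topology R I) (right_genideal (completion R I) A)"
proof (intro allI impI conjI)
  have r: "ring R" using assms(2) unfolding F_algebra_def by blast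
  have id: "ideal (I t) R" and dec: "I (Suc t) \<subseteq> I t" for t
    using assms(3) unfolding descending_filtration_def by auto
  have la: "left_artinian (R Quot I t)" and ra: "right_artinian (R Quot I t)" for t
    using assms(4)[of t] unfolding artinian_ring_def by auto
  interpret L: filt R I
    by (rule filt.intro[OF r filt_axioms.intro]) (simp_all add: id dec la)
  interpret Op: filt "oppR R" I
    by (rule filt.intro[OF opp_ring[OF r] filt_axioms.intro]) (simp_all add: opp_ideal[OF id] dec opp_Quot opp_artinian ra)
  fix A assume A: "finite A \<and> A \<subseteq> carrier (completion R I)"
  show "closedin (completion_topology R I) (left_genideal (completion R I) A)"
    using L.left_main A by blast
  have "A \<subseteq> carrier (completion (oppR R) I)" using A by (simp add: opp_completion)
  then have "closedin (completion_topology (oppR R) I) (left_genideal (completion (oppR R) I) A)"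
    using Op.left_main A by blast
  then show "closedin (completion_topology R I) (right_genideal (completion R I) A)"
    by (simp add: opp_topology opp_completion opp_right_genideal)
qed


end
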